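(* With the construction of the context (fixed $\beta>0$, $\alpha,\xi>0$, $\varphi$, $A$, $\omega$, and a positive even integer $D$), for all $\theta,\theta'\in\{0,1\}^D$, $$\mathrm{KL}(f_\theta,f_{\theta'})=\int f_\theta\ln\frac{f_\theta}{f_{\theta'}}\le\frac{5\xi\alpha}{4A^2}D^{-2\beta}.$$
   Context: $\psi(x)=\pi^{-1/2}e^{-x^2}$. For $\beta>0$, $r$ is the largest integer strictly less than $\beta$; $\mathcal{H}(\beta,\mathcal P)$ for $\mathcal{P}=\{\gamma,l^+,L,\varepsilon,C,\alpha,\xi,M\}$ is the set of probability densities $f$ with $\ln f$ $r$ times differentiable, $|(\ln f)^{(r)}(x)-(\ln f)^{(r)}(y)|\le r!L(x)|y-x|^{\beta-r}$ for $|x-y|\le\gamma$, $|(\ln f)^{(j)}(0)|\le l^+$; $\int|(\ln f)^{(j)}|^{(2\beta+\varepsilon)/j}f\le C$, $\int|L|^{2+\varepsilon/\beta}f\le C$; $f\le M\psi$; $f>0$ nondecreasing on $(-\infty,-\alpha)$, nonincreasing on $(\alpha,\infty)$, $f\ge\xi$ on $[-\alpha,\alpha]$. Construction: $\varphi$ infinitely differentiable, supported in $(1/4,3/4)$, $\int\varphi=0$, $\int\varphi^2=1$; $A=\max_{0\le k\le r+1}\|\varphi^{(k)}\|_\infty>1$; $\varphi_j(x)=\frac{\xi D^{-\beta}}{A}\varphi\big(\frac D\alpha(x+\frac\alpha2)-(j-1)\big)$, $j=1..D$. $\omega\in\mathcal{T}(\alpha,\xi)\cap\mathcal H(\beta,\tilde{\mathcal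 P})$ where $\mathcal{T}(\alpha,\xi)$ is the set of $\omega:\mathbb R\to\mathbb R^+$ nondecreasing on $(-\infty,-\alpha/2)$, nonincreasing on $(\alpha/2,\infty)$, $\omega=2\xi$ on $[-3\alpha/4,3\alpha/4]$, $\omega(\pm\alpha)=\xi$, and $\tilde{\mathcal P}=\{\alpha/4,\ln(2\xi),\tilde L,\tilde\varepsilon,\tilde C,\alpha,\xi,\tilde M\}$. $f_\theta=\omega+\sum_{j=1}^D(2\theta_j-1)\varphi_j$. *)

theory Defs
  imports "HOL-Analysis.Analysis"
begin

definition psi :: "real \<Rightarrow> real" where
  "psi x = exp (- x\<^sup>2) / sqrt pi"

text \<open>r = largest integer strictly less than beta (for beta > 0).\<close>
definition hr :: "real \<Rightarrow> nat" where
  "hr \<beta> = nat (\<lceil>\<beta>\<rceil> - 1)"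

abbreviation nderiv :: "nat \<Rightarrow> (real \<Rightarrow> real) \<Rightarrow> real \<Rightarrow> real" where
  "nderiv j g \<equiv> (deriv ^^ j) g"

definition k_times_differentiable :: "nat \<Rightarrow> (real \<Rightarrow> real) \<Rightarrow> bool" where
  "k_times_differentiable k g \<longleftrightarrow> (\<forall>j<k. \<forall>x. nderiv j g differentiable (at x))"

definition infinitely_differentiable :: "(real \<Rightarrow> real) \<Rightarrow> bool" where
  "infinitely_differentiable g \<longleftrightarrow> (\<forall>k. k_times_differentiable k g)"

definition H_class ::
  "real \<Rightarrow> real \<Rightarrow> real \<Rightarrow> (real \<Rightarrow> real) \<Rightarrow> real \<Rightarrow> real \<Rightarrow> real \<Rightarrow> real \<Rightarrow> real
     \<Rightarrow> (real \<Rightarrow> real) set" where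
  "H_class \<beta> \<gamma> lp L \<epsilon> C \<alpha> \<xi> M =
    {f. f \<in> borel_measurable borel \<and> (\<forall>x. 0 \<le> f x) \<and>
        (\<integral>\<^sup>+ x. ennreal (f x) \<partial>lborel) = 1 \<and>
        (let l = (\<lambda>x. ln (f x)); r = hr \<beta> in
          k_times_differentiable r l \<and>
          (\<forall>x y. \<bar>x - y\<bar> \<le> \<gamma> \<longrightarrow>
              \<bar>nderiv r l x - nderiv r l y\<bar> \<le> fact r * L x * \<bar>y - x\<bar> powr (\<beta> - real r)) \<and>
          (\<forall>j\<in>{1..r}. \<bar>nderiv j l 0\<bar> \<le> lp) \<and>
          (\<forall>j\<in>{1..r}. (\<integral>\<^sup>+ x. ennreal (\<bar>nderiv j l x\<bar> powr ((2*\<beta> + \<epsilon>) / real j) * f x) \<partial>lborel)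
                          \<le> ennreal C) \<and>
          (\<integral>\<^sup>+ x. ennreal (\<bar>L x\<bar> powr (2 + \<epsilon> / \<beta>) * f x) \<partial>lborel) \<le> ennreal C) \<and>
        (\<forall>x. f x \<le> M * psi x) \<and>
        (\<forall>x. x < - \<alpha> \<longrightarrow> 0 < f x) \<and> (\<forall>x. \<alpha> < x \<longrightarrow> 0 < f x) \<and>
        mono_on {..< - \<alpha>} f \<and> antimono_on {\<alpha> <..} f \<and>
        (\<forall>x\<in>{- \<alpha> .. \<alpha>}. \<xi> \<le> f x)}"

definition T_class :: "real \<Rightarrow> real \<Rightarrow> (real \<Rightarrow> real) set" where
  "T_class \<alpha> \<xi> =
    {\<omega>. (\<forall>x. 0 \<le> \<omega> x) \<and> mono_on {..< - \<alpha> / 2} \<omega> \<and> antimono_on {\<alpha> / 2 <..} \<omega> \<and>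
         (\<forall>x\<in>{- 3 * \<alpha> / 4 .. 3 * \<alpha> / 4}. \<omega> x = 2 * \<xi>) \<and>
         \<omega> \<alpha> = \<xi> \<and> \<omega> (- \<alpha>) = \<xi>}"

definition sup_norm :: "(real \<Rightarrow> real) \<Rightarrow> real" where
  "sup_norm g = (SUP x. \<bar>g x\<bar>)"

definition phi_j :: "(real \<Rightarrow> real) \<Rightarrow> real \<Rightarrow> real \<Rightarrow> real \<Rightarrow> real \<Rightarrow> nat \<Rightarrow> nat \<Rightarrow> real \<Rightarrow> real" where
  "phi_j \<phi> \<beta> \<alpha> \<xi> A D j x =
     \<xi> * real D powr (- \<beta>) / A * \<phi> (real D / \<alpha> * (x + \<alpha> / 2) - (real j - 1))"

definition f_theta :: "(real \<Rightarrow> real) \<Rightarrow> (real \<Rightarrow> real) \<Rightarrow> real \<Rightarrow> real \<Rightarrow> real \<Rightarrow> real \<Rightarrow> nat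
     \<Rightarrow> (nat \<Rightarrow> real) \<Rightarrow> real \<Rightarrow> real" where
  "f_theta \<omega> \<phi> \<beta> \<alpha> \<xi> A D \<theta> x =
     \<omega> x + (\<Sum>j=1..D. (2 * \<theta> j - 1) * phi_j \<phi> \<beta> \<alpha> \<xi> A D j x)"

definition KL :: "(real \<Rightarrow> real) \<Rightarrow> (real \<Rightarrow> real) \<Rightarrow> real" where
  "KL f g = (\<integral>x. f x * ln (f x / g x) \<partial>lborel)"

end

theory Submission
  imports Defs
begin


lemma ln_upper1:
  fixes y :: real assumes "1 \<le> y" shows "ln y \<le> (y - 1/y)/2"
proof -
  let ?k = "\<lambda>z::real. (z - 1/z)/2 - ln z"
  have "?k 1 \<le> ?k y"
  proof (rule DERIV_nonneg_imp_increasing_open[OF assms])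
    fix x :: real assume x: "1 < x" "x < y"
    have "DERIV ?k x :> ((1 + 1/x^2)/2 - 1/x)"
      using x by (auto intro!: derivative_eq_intros simp: power2_eq_square field_simps)
    moreover have "(1 + 1/x^2)/2 - 1/x = (1 - 1/x)^2/2"
      using x by (simp add: power2_eq_square field_simps)
    ultimately show "\<exists>d. DERIV ?k x :> d \<and> d \<ge> 0" by auto
  next
    show "continuous_on {1..y} ?k"
      by (intro continuous_intros) auto
  qed
  then show ?thesis by simp
qed

lemma ln_upper2:
  fixes y :: real assumes "0 < y" "y \<le> 1" shows "ln y \<le> 2*(y-1)/(y+1)"
proof -
  let ?k = "\<lambda>z::real. ln z - 2*(z-1)/(z+1)"
  have "?k y \<le> ?k 1"
  proof (rule DERIV_nonneg_imp_increasing_open[OF assms(2)])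
    fix x :: real assume x: "y < x" "x < 1"
    have "DERIV ?k x :> (1/x - (2*(x+1) - 2*(x-1))/(x+1)^2)"
      using x assms by (auto intro!: derivative_eq_intros simp: power2_eq_square)
    moreover have "(2*(x+1) - 2*(x-1))/(x+1)^2 = 4/(x+1)^2" by simp
    moreover have "4/(x+1)^2 \<le> 1/x"
    proof -
      have "4*x \<le> (x+1)^2" using sum_power2_ge_zero[of "x-1" 0] by (simp add: power2_eq_square algebra_simps)
      then show ?thesis using x assms by (simp add: divide_simps)
    qed
    ultimately show "\<exists>d. DERIV ?k x :> d \<and> d \<ge> 0" by auto
  next
    show "continuous_on {y..1} ?k"
      using assms by (intro continuous_intros) auto
  qed
  then show ?thesis by simp
qed

lemma core_ln:
  fixes \<xi> u :: real assumes xi: "0 < \<xi>" and u: "\<bar>u\<bar> \<le> \<xi>/4"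
  shows "2*u \<le> (2*\<xi>+u) * ln ((2*\<xi>+u)/(2*\<xi>-u))"
    and "(2*\<xi>+u) * ln ((2*\<xi>+u)/(2*\<xi>-u)) \<le> 2*u + 5/(4*\<xi>) * u^2"
proof -
  define f where "f = 2*\<xi>+u"
  define g where "g = 2*\<xi>-u"
  have fp: "f > 0" and gp: "g > 0" using xi u by (auto simp: f_def g_def)
  have "ln (g/f) \<le> g/f - 1" using fp gp by (intro ln_le_minus_one) simp
  moreover have "ln (f/g) = - ln (g/f)" using fp gp by (simp add: ln_div)
  ultimately have "ln (f/g) \<ge> 1 - g/f" by simp
  hence "f * ln (f/g) \<ge> f * (1 - g/f)" using fp by (intro mult_left_mono) auto
  moreover have "f * (1 - g/f) = 2*u" using fp by (simp add: field_simps f_def g_def)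
  ultimately show "2*u \<le> (2*\<xi>+u) * ln ((2*\<xi>+u)/(2*\<xi>-u))" by (simp add: f_def g_def)
  show "(2*\<xi>+u) * ln ((2*\<xi>+u)/(2*\<xi>-u)) \<le> 2*u + 5/(4*\<xi>) * u^2"
  proof (cases "u \<ge> 0")
    case True
    have "1 \<le> f/g" using True fp gp by (simp add: f_def g_def field_simps)
    from ln_upper1[OF this] have "f * ln (f/g) \<le> f * ((f/g - 1/(f/g))/2)"
      using fp by (intro mult_left_mono) auto
    also have "\<dots> = (f^2 - g^2)/(2*g)" using fp gp by (simp add: field_simps power2_eq_square)
    also have "f^2 - g^2 = 8*\<xi>*u" by (simp add: f_def g_def power2_eq_square algebra_simps)
    also have "8*\<xi>*u/(2*g) = 4*\<xi>*u/g" by simp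
    also have "\<dots> \<le> 2*u + 5/(4*\<xi>) * u^2"
    proof -
      have "4*\<xi>*u/g - 2*u = 2*u^2/g" using gp by (simp add: g_def field_simps power2_eq_square)
      also have "\<dots> \<le> 5/(4*\<xi>) * u^2"
      proof -
        have "8*\<xi> \<le> 5*g" using u True by (simp add: g_def)
        hence h2: "2/g \<le> 5/(4*\<xi>)" using gp xi by (simp add: field_simps)
        show ?thesis using mult_right_mono[OF h2, of "u^2"] by simp
      qed
      finally show ?thesis by simp
    qed
    finally show ?thesis by (simp add: f_def g_def)
  next
    case False
    have "f/g \<le> 1" using False fp gp by (simp add: f_def g_def field_simps)
    from ln_upper2[OF _ this] fp gp have "f * ln (f/g) \<le> f * (2*(f/g-1)/(f/g+1))"
      by (intro mult_left_mono) auto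
    also have "\<dots> = f * u / \<xi>" using fp gp xi by (simp add: f_def g_def field_simps)
    also have "\<dots> = 2*u + u^2/\<xi>" using xi by (simp add: f_def field_simps power2_eq_square)
    also have "\<dots> \<le> 2*u + 5/(4*\<xi>) * u^2" using xi by (simp add: field_simps)
    finally show ?thesis by (simp add: f_def g_def)
  qed
qed



lemma phi_supp_pt:
  fixes \<phi> :: "real \<Rightarrow> real"
  assumes "closure {x. \<phi> x \<noteq> (0::real)} \<subseteq> {1/4 <..< 3/4}" "\<phi> x \<noteq> 0"
  shows "1/4 < x \<and> x < 3/4"
proof -
  have "x \<in> {x. \<phi> x \<noteq> 0}" using assms(2) by simp
  then have "x \<in> closure {x. \<phi> x \<noteq> 0}" by (rule subsetD[OF closure_subset])
  then have "x \<in> {1/4 <..< 3/4}" by (rule subsetD[OF assms(1)])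
  then show ?thesis by simp
qed

lemma phi_zero_out:
  fixes \<phi> :: "real \<Rightarrow> real"
  assumes "closure {x. \<phi> x \<noteq> (0::real)} \<subseteq> {1/4 <..< 3/4}" "\<not> (1/4 < x \<and> x < 3/4)"
  shows "\<phi> x = 0"
proof (rule ccontr)
  assume "\<phi> x \<noteq> 0"
  from phi_supp_pt[OF assms(1) this] assms(2) show False by simp
qed

lemma phi_diff:
  assumes "infinitely_differentiable \<phi>"
  shows "\<And>x. DERIV \<phi> x :> deriv \<phi> x" and "continuous_on UNIV (deriv \<phi>)"
    and "continuous_on UNIV \<phi>"
proof -
  have k: "k_times_differentiable 2 \<phi>" using assms unfolding infinitely_differentiable_def by blast
  have kk: "\<forall>j<2. \<forall>x. nderiv j \<phi> differentiable (at x)" using k unfolding k_times_differentiable_def .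
  have d0': "\<And>x. nderiv 0 \<phi> differentiable (at x)" using kk[rule_format, of 0] by simp
  have d1': "\<And>x. nderiv 1 \<phi> differentiable (at x)" using kk[rule_format, of 1] by simp
  have d0: "\<And>x. \<phi> differentiable (at x)" using d0' by simp
  have d1: "\<And>x. deriv \<phi> differentiable (at x)" using d1' by simp
  show "\<And>x. DERIV \<phi> x :> deriv \<phi> x" using d0 by (simp add: DERIV_deriv_iff_real_differentiable)
  show "continuous_on UNIV (deriv \<phi>)"
    by (intro continuous_at_imp_continuous_on ballI differentiable_imp_continuous_within d1)
  show "continuous_on UNIV \<phi>"
    by (intro continuous_at_imp_continuous_on ballI differentiable_imp_continuous_within d0)
qed

lemma phi_deriv_bdd:
  assumes "infinitely_differentiable \<phi>" "closure {x. \<phi> x \<noteq> (0::real)} \<subseteq> {1/4 <..< 3/4}"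
  shows "bdd_above (range (\<lambda>x. \<bar>deriv \<phi> x\<bar>))"
proof -
  have cont: "continuous_on UNIV (deriv \<phi>)" by (rule phi_diff(2)[OF assms(1)])
  have out: "deriv \<phi> y = 0" if y: "y \<notin> {1/4..3/4}" for y
  proof -
    define S where "S = (if y < 1/4 then {..<1/4} else {(3::real)/4<..})"
    have oS: "open S" and yS: "y \<in> S" using y by (auto simp: S_def)
    have z: "0 = \<phi> z" if zS: "z \<in> S" for z
    proof -
      have "\<not> (1/4 < z \<and> z < 3/4)" using zS y by (auto simp: S_def split: if_splits)
      from phi_zero_out[OF assms(2) this] show ?thesis by simp
    qed
    have "DERIV \<phi> y :> 0"
      by (rule has_field_derivative_transform_within_open[OF DERIV_const oS yS z])
    from DERIV_unique[OF phi_diff(1)[OF assms(1), of y] this] show ?thesis .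
  qed
  have "compact (deriv \<phi> ` {1/4..3/4})"
  proof (rule compact_continuous_image)
    show "continuous_on {1/4..3/4} (deriv \<phi>)" by (rule continuous_on_subset[OF cont]) simp
  qed simp
  then have "bounded (deriv \<phi> ` {1/4..3/4})" by (rule compact_imp_bounded)
  then obtain B where B0: "\<forall>z \<in> deriv \<phi> ` {1/4..3/4}. norm z \<le> B"
    unfolding bounded_iff by (elim exE)
  have B: "norm z \<le> B" if "z \<in> deriv \<phi> ` {1/4..3/4}" for z using B0 that by (rule bspec)
  have "\<bar>deriv \<phi> x\<bar> \<le> max B 0" for x
  proof (cases "x \<in> {1/4..3/4}")
    case True
    then have "norm (deriv \<phi> x) \<le> B" by (intro B imageI)
    then show ?thesis by simp
  next
    case False
    then show ?thesis using out[OF False] by simp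
  qed
  then show ?thesis by (rule bdd_aboveI2)
qed

lemma phi_bound:
  assumes "infinitely_differentiable \<phi>" "closure {x. \<phi> x \<noteq> (0::real)} \<subseteq> {1/4 <..< 3/4}"
    and "sup_norm (deriv \<phi>) \<le> A"
  shows "\<bar>\<phi> x\<bar> \<le> A/4"
proof -
  have db: "\<bar>deriv \<phi> z\<bar> \<le> A" for z
  proof -
    have "\<bar>deriv \<phi> z\<bar> \<le> (SUP x. \<bar>deriv \<phi> x\<bar>)"
      by (rule cSUP_upper[OF UNIV_I phi_deriv_bdd[OF assms(1,2)]])
    then show ?thesis using assms(3) unfolding sup_norm_def by linarith
  qed
  have p14: "\<phi> (1/4) = 0" and p34: "\<phi> (3/4) = 0"
    using phi_zero_out[OF assms(2)] by auto
  show ?thesis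
  proof (cases "1/4 < x \<and> x < 3/4")
    case False
    have "\<phi> x = 0" by (rule phi_zero_out[OF assms(2) False])
    then show ?thesis using db[of 0] by simp
  next
    case True
    show ?thesis
    proof (cases "x \<le> 1/2")
      case True2: True
      have "\<exists>z. 1/4 < z \<and> z < x \<and> \<phi> x - \<phi> (1/4) = (x - 1/4) * deriv \<phi> z"
        by (rule MVT2) (use True phi_diff(1)[OF assms(1)] in auto)
      then obtain z where "\<phi> x - \<phi> (1/4) = (x - 1/4) * deriv \<phi> z" by blast
      then have "\<bar>\<phi> x\<bar> = (x - 1/4) * \<bar>deriv \<phi> z\<bar>" using p14 True by (simp add: abs_mult)
      also have "\<dots> \<le> (1/4) * A"
        using db[of z] True True2 by (intro mult_mono) auto
      finally show ?thesis by simp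
    next
      case False2: False
      have "\<exists>z. x < z \<and> z < 3/4 \<and> \<phi> (3/4) - \<phi> x = (3/4 - x) * deriv \<phi> z"
        by (rule MVT2) (use True phi_diff(1)[OF assms(1)] in auto)
      then obtain z where "\<phi> (3/4) - \<phi> x = (3/4 - x) * deriv \<phi> z" by blast
      then have "\<phi> x = - ((3/4 - x) * deriv \<phi> z)" using p34 by simp
      then have "\<bar>\<phi> x\<bar> = (3/4 - x) * \<bar>deriv \<phi> z\<bar>" using True by (simp add: abs_mult)
      also have "\<dots> \<le> (1/4) * A"
        using db[of z] True False2 by (intro mult_mono) auto
      finally show ?thesis by simp
    qed
  qed
qed



lemma bump_int:
  fixes \<phi> :: "real \<Rightarrow> real" and a t :: real
  assumes a: "a > 0" and i: "integrable lborel \<phi>"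
  shows "integrable lborel (\<lambda>x. \<phi> (t + a*x))"
    and "(\<integral>x. \<phi> (t + a*x) \<partial>lborel) = (\<integral>x. \<phi> x \<partial>lborel) / a"
proof -
  have a0: "a \<noteq> 0" using a by simp
  show "integrable lborel (\<lambda>x. \<phi> (t + a*x))" by (rule lborel_integrable_real_affine[OF i a0])
  have "(\<integral>x. \<phi> x \<partial>lborel) = \<bar>a\<bar> *\<^sub>R (\<integral>x. \<phi> (t + a*x) \<partial>lborel)"
    by (rule lborel_integral_real_affine[OF a0])
  then show "(\<integral>x. \<phi> (t + a*x) \<partial>lborel) = (\<integral>x. \<phi> x \<partial>lborel) / a"
    using a by simp
qed

lemma sum_single:
  fixes F :: "nat \<Rightarrow> real"
  assumes "finite S" "j0 \<in> S" "\<And>j. j \<in> S \<Longrightarrow> j \<noteq> j0 \<Longrightarrow> F j = 0"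
  shows "sum F S = F j0"
proof -
  have "sum F S = F j0 + sum F (S - {j0})" by (rule sum.remove[OF assms(1,2)])
  also have "sum F (S - {j0}) = 0" by (rule sum.neutral) (use assms(3) in blast)
  finally show ?thesis by simp
qed

lemma sum_zero:
  fixes F :: "nat \<Rightarrow> real"
  assumes "\<And>j. j \<in> S \<Longrightarrow> F j = 0"
  shows "sum F S = 0"
  by (rule sum.neutral) (use assms in blast)



theorem lemma6:
  fixes \<beta> \<alpha> \<xi> A Lt_eps Ct Mt :: real
    and Lt :: "real \<Rightarrow> real"
    and \<phi> \<omega> :: "real \<Rightarrow> real"
    and D :: nat
    and \<theta> \<theta>' :: "nat \<Rightarrow> real"
  assumes beta_pos: "0 < \<beta>" and alpha_pos: "0 < \<alpha>" and xi_pos: "0 < \<xi>"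
    and phi_smooth: "infinitely_differentiable \<phi>"
    and phi_supp: "closure {x. \<phi> x \<noteq> 0} \<subseteq> {1/4 <..< 3/4}"
    and phi_int: "integrable lborel \<phi>" "(\<integral>x. \<phi> x \<partial>lborel) = 0"
    and phi_sq: "integrable lborel (\<lambda>x. (\<phi> x)\<^sup>2)" "(\<integral>x. (\<phi> x)\<^sup>2 \<partial>lborel) = 1"
    and A_def: "A = Max ((\<lambda>k. sup_norm (nderiv k \<phi>)) ` {0 .. hr \<beta> + 1})"
    and A_gt1: "1 < A"
    and omega_T: "\<omega> \<in> T_class \<alpha> \<xi>"
    and omega_H: "\<omega> \<in> H_class \<beta> (\<alpha> / 4) (ln (2 * \<xi>)) Lt Lt_eps Ct \<alpha> \<xi> Mt"
    and D_pos: "0 < D" and D_even: "even D"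
    and theta: "\<forall>j\<in>{1..D}. \<theta> j \<in> {0, 1}"
    and theta': "\<forall>j\<in>{1..D}. \<theta>' j \<in> {0, 1}"
  shows "integrable lborel (\<lambda>x. f_theta \<omega> \<phi> \<beta> \<alpha> \<xi> A D \<theta> x *
            ln (f_theta \<omega> \<phi> \<beta> \<alpha> \<xi> A D \<theta> x / f_theta \<omega> \<phi> \<beta> \<alpha> \<xi> A D \<theta>' x))
       \<and> KL (f_theta \<omega> \<phi> \<beta> \<alpha> \<xi> A D \<theta>) (f_theta \<omega> \<phi> \<beta> \<alpha> \<xi> A D \<theta>')
           \<le> 5 * \<xi> * \<alpha> / (4 * A\<^sup>2) * real D powr (- 2 * \<beta>)"
proof -
  define P where "P = real D powr (- \<beta>)"
  define c where "c = \<xi> * P / A"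
  define a where "a = real D / \<alpha>"
  define tt where "tt j = real D / 2 - (real j - 1)" for j :: nat
  define b where "b j x = \<phi> (tt j + a * x)" for j x
  define f where "f = f_theta \<omega> \<phi> \<beta> \<alpha> \<xi> A D \<theta>"
  define g where "g = f_theta \<omega> \<phi> \<beta> \<alpha> \<xi> A D \<theta>'"
  define d where "d x = (\<Sum>j=1..D. 2 * (\<theta> j - \<theta>' j) * (c * b j x))" for x
  define Q where "Q x = (\<Sum>j=1..D. (2 * (\<theta> j - \<theta>' j))^2 * (c * b j x)^2)" for x
  define h where "h x = f x * ln (f x / g x)" for x
  define K where "K = 5 / (16 * \<xi>)"
  have Dr: "real D \<ge> 1" using D_pos by simp
  have A_pos: "A > 0" using A_gt1 by simp
  have a_pos: "a > 0" using alpha_pos D_pos by (simp add: a_def)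
  have P_pos: "P > 0" using D_pos by (simp add: P_def)
  have P_le1: "P \<le> 1" unfolding P_def
    using powr_mono[of "-\<beta>" 0 "real D"] beta_pos Dr by simp
  have c_pos: "c > 0" using xi_pos P_pos A_pos by (simp add: c_def)
  have K_pos: "K > 0" using xi_pos by (simp add: K_def)
  have arg_eq: "real D / \<alpha> * (x + \<alpha> / 2) - (real j - 1) = tt j + a * x" for x :: real and j :: nat
    using alpha_pos by (simp add: tt_def a_def field_simps)
  have pj: "phi_j \<phi> \<beta> \<alpha> \<xi> A D j x = c * b j x" for j x
    unfolding phi_j_def c_def b_def P_def arg_eq by simp
  have f_eq: "f x = \<omega> x + (\<Sum>j=1..D. (2 * \<theta> j - 1) * (c * b j x))" for x
    unfolding f_def f_theta_def pj ..
  have g_eq: "g x = \<omega> x + (\<Sum>j=1..D. (2 * \<theta>' j - 1) * (c * b j x))" for x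
    unfolding g_def f_theta_def pj ..
  have supA: "sup_norm (deriv \<phi>) \<le> A"
  proof -
    have "sup_norm (nderiv 1 \<phi>) \<le> Max ((\<lambda>k. sup_norm (nderiv k \<phi>)) ` {0 .. hr \<beta> + 1})"
    proof (rule Max_ge)
      show "finite ((\<lambda>k. sup_norm (nderiv k \<phi>)) ` {0 .. hr \<beta> + 1})" by simp
      show "sup_norm (nderiv 1 \<phi>) \<in> (\<lambda>k. sup_norm (nderiv k \<phi>)) ` {0 .. hr \<beta> + 1}"
        by (rule imageI) simp
    qed
    then show ?thesis using A_def by simp
  qed
  have bb: "\<bar>b j x\<bar> \<le> A/4" for j x
    unfolding b_def by (rule phi_bound[OF phi_smooth phi_supp supA])
  have cb: "\<bar>c * b j x\<bar> \<le> \<xi>/4" for j x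
  proof -
    have "\<bar>c * b j x\<bar> = c * \<bar>b j x\<bar>" using c_pos by (simp add: abs_mult)
    also have "\<dots> \<le> c * (A/4)" using bb c_pos by (intro mult_left_mono) auto
    also have "\<dots> = \<xi> * P / 4" using A_pos by (simp add: c_def)
    also have "\<dots> \<le> \<xi> / 4" using P_le1 xi_pos by simp
    finally show ?thesis .
  qed
  have bsupp: "1/4 < tt j + a * x \<and> tt j + a * x < 3/4" if "b j x \<noteq> 0" for j x
    using phi_supp_pt[OF phi_supp] that unfolding b_def by blast
  have uniq: "j = k" if "b j x \<noteq> 0" "b k x \<noteq> 0" for j k x
  proof -
    have 1: "1/4 < tt j + a * x \<and> tt j + a * x < 3/4" by (rule bsupp[OF that(1)])
    have 2: "1/4 < tt k + a * x \<and> tt k + a * x < 3/4" by (rule bsupp[OF that(2)])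
    have "real j < real (Suc k)" using 1 2 by (simp add: tt_def)
    then have jk: "j < Suc k" by (simp only: of_nat_less_iff)
    have "real k < real (Suc j)" using 1 2 by (simp add: tt_def)
    then have kj: "k < Suc j" by (simp only: of_nat_less_iff)
    from jk kj show ?thesis by simp
  qed
  have omega_mid: "\<forall>x\<in>{- 3 * \<alpha> / 4 .. 3 * \<alpha> / 4}. \<omega> x = 2 * \<xi>"
    using omega_T[unfolded T_class_def mem_Collect_eq]
    by (elim conjE)
  have inmid: "\<omega> x = 2 * \<xi>" if "j \<in> {1..D}" "b j x \<noteq> 0" for j x
  proof -
    have 1: "1/4 < tt j + a * x \<and> tt j + a * x < 3/4" by (rule bsupp[OF that(2)])
    have jr: "1 \<le> real j" "real j \<le> real D" using that(1) by auto
    have aa: "a * (x + \<alpha>/2) = tt j + a * x + real j - 1"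
      using alpha_pos by (simp add: a_def tt_def field_simps)
    have "0 < a * (x + \<alpha>/2)" using 1 jr aa by linarith
    then have l: "0 < x + \<alpha>/2" using a_pos by (simp add: zero_less_mult_iff)
    have "a * (x + \<alpha>/2) < real D" using 1 jr aa by linarith
    then have "x + \<alpha>/2 < \<alpha>" using alpha_pos D_pos by (simp add: a_def field_simps)
    then have "x \<in> {- 3 * \<alpha> / 4 .. 3 * \<alpha> / 4}" using l alpha_pos by simp
    then show ?thesis using omega_mid by (rule bspec[rotated])
  qed
  have pw: "d x \<le> h x \<and> h x \<le> d x + K * Q x" for x
  proof -
    have h0: "h x = 0" if "f x = g x"
      unfolding h_def using that by (cases "f x = 0") simp_all
    show ?thesis
    proof (cases "\<exists>j\<in>{1..D}. b j x \<noteq> 0")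
      case False
      then have z: "b j x = 0" if "j \<in> {1..D}" for j using that by blast
      have fx: "f x = \<omega> x" unfolding f_eq using z by (simp add: sum_zero)
      have gx: "g x = \<omega> x" unfolding g_eq using z by (simp add: sum_zero)
      have dx: "d x = 0" unfolding d_def using z by (simp add: sum_zero)
      have Qx: "Q x = 0" unfolding Q_def using z by (simp add: sum_zero)
      have "h x = 0" using h0 fx gx by simp
      then show ?thesis using dx Qx by simp
    next
      case True
      then obtain j0 where j0: "j0 \<in> {1..D}" "b j0 x \<noteq> 0" by blast
      have z: "b j x = 0" if "j \<in> {1..D}" "j \<noteq> j0" for j
      proof (rule ccontr)
        assume "b j x \<noteq> 0"
        from uniq[OF this j0(2)] that(2) show False by simp
      qed
      define v where "v = c * b j0 x"
      have vb: "\<bar>v\<bar> \<le> \<xi>/4" unfolding v_def by (rule cb)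
      have om: "\<omega> x = 2 * \<xi>" by (rule inmid[OF j0])
      have fx: "f x = 2 * \<xi> + (2 * \<theta> j0 - 1) * v"
        unfolding f_eq om v_def
        by (subst sum_single[OF _ j0(1)]) (simp_all add: z)
      have gx: "g x = 2 * \<xi> + (2 * \<theta>' j0 - 1) * v"
        unfolding g_eq om v_def
        by (subst sum_single[OF _ j0(1)]) (simp_all add: z)
      have dx: "d x = 2 * (\<theta> j0 - \<theta>' j0) * v"
        unfolding d_def v_def
        by (subst sum_single[OF _ j0(1)]) (simp_all add: z)
      have Qx: "Q x = (2 * (\<theta> j0 - \<theta>' j0))^2 * v^2"
        unfolding Q_def v_def
        by (subst sum_single[OF _ j0(1)]) (simp_all add: z)
      have t0: "\<theta> j0 = 0 \<or> \<theta> j0 = 1" using theta j0(1) by simp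
      have t0': "\<theta>' j0 = 0 \<or> \<theta>' j0 = 1" using theta' j0(1) by simp
      show ?thesis
      proof (cases "\<theta> j0 = \<theta>' j0")
        case True
        have "h x = 0" using h0 fx gx True by simp
        then show ?thesis using dx Qx True by simp
      next
        case False
        then have cs: "(\<theta> j0 = 1 \<and> \<theta>' j0 = 0) \<or> (\<theta> j0 = 0 \<and> \<theta>' j0 = 1)"
          using t0 t0' by auto
        then show ?thesis
        proof
          assume c1: "\<theta> j0 = 1 \<and> \<theta>' j0 = 0"
          have e: "f x = 2*\<xi> + v" "g x = 2*\<xi> - v" "d x = 2 * v" "Q x = 4 * v^2"
            using fx gx dx Qx c1 by simp_all
          have hx: "h x = (2*\<xi>+v) * ln ((2*\<xi>+v)/(2*\<xi>-v))" unfolding h_def e(1,2) ..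
          have "K * Q x = 5/(4*\<xi>) * v^2" unfolding e(4) K_def by simp
          then show ?thesis using core_ln[OF xi_pos vb] hx e(3) by simp
        next
          assume c2: "\<theta> j0 = 0 \<and> \<theta>' j0 = 1"
          define u where "u = - v"
          have ub: "\<bar>u\<bar> \<le> \<xi>/4" using vb by (simp add: u_def)
          have e: "f x = 2*\<xi> + u" "g x = 2*\<xi> - u" "d x = 2 * u" "Q x = 4 * u^2"
            using fx gx dx Qx c2 by (simp_all add: u_def)
          have hx: "h x = (2*\<xi>+u) * ln ((2*\<xi>+u)/(2*\<xi>-u))" unfolding h_def e(1,2) ..
          have "K * Q x = 5/(4*\<xi>) * u^2" unfolding e(4) K_def by simp
          then show ?thesis using core_ln[OF xi_pos ub] hx e(3) by simp
        qed
      qed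
    qed
  qed
  have ib: "integrable lborel (b j)" for j
    unfolding b_def by (rule bump_int(1)[OF a_pos phi_int(1)])
  have intb: "(\<integral>x. b j x \<partial>lborel) = 0" for j
    unfolding b_def using bump_int(2)[OF a_pos phi_int(1)] phi_int(2) by simp
  have ib2: "integrable lborel (\<lambda>x. (b j x)^2)" for j
    unfolding b_def by (rule bump_int(1)[OF a_pos phi_sq(1), of "tt j"])
  have intb2: "(\<integral>x. (b j x)^2 \<partial>lborel) = 1 / a" for j
    unfolding b_def using bump_int(2)[OF a_pos phi_sq(1), of "tt j"] phi_sq(2) by simp
  have id: "integrable lborel d"
    unfolding d_def using ib by simp
  have intd: "(\<integral>x. d x \<partial>lborel) = 0"
    unfolding d_def using ib intb by (simp add: integral_sum integral_mult_right_zero)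
  have iQ: "integrable lborel Q"
  proof -
    have "Q = (\<lambda>x. \<Sum>j=1..D. ((2 * (\<theta> j - \<theta>' j))^2 * c^2) * (b j x)^2)"
      unfolding Q_def by (simp add: power_mult_distrib mult.assoc)
    then show ?thesis using ib2 by (simp add: integrable_sum integrable_mult_right)
  qed
  have intQ: "(\<integral>x. Q x \<partial>lborel) \<le> 4 * c^2 * \<alpha>"
  proof -
    have Qe: "Q = (\<lambda>x. \<Sum>j=1..D. ((2 * (\<theta> j - \<theta>' j))^2 * c^2) * (b j x)^2)"
      unfolding Q_def by (simp add: power_mult_distrib mult.assoc)
    have "(\<integral>x. Q x \<partial>lborel) = (\<Sum>j=1..D. ((2 * (\<theta> j - \<theta>' j))^2 * c^2) * (1 / a))"
      unfolding Qe using ib2 intb2 by (simp add: integral_sum)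
    also have "\<dots> \<le> (\<Sum>j=1..D. 4 * c^2 * (1 / a))"
    proof (rule sum_mono)
      fix j assume j: "j \<in> {1..D}"
      have "\<theta> j = 0 \<or> \<theta> j = 1" using theta j by simp
      moreover have "\<theta>' j = 0 \<or> \<theta>' j = 1" using theta' j by simp
      ultimately have "(2 * (\<theta> j - \<theta>' j))^2 \<le> 4"
        by (elim disjE) (simp_all add: power2_eq_square)
      then show "((2 * (\<theta> j - \<theta>' j))^2 * c^2) * (1 / a) \<le> 4 * c^2 * (1 / a)"
        using a_pos by (intro mult_right_mono) auto
    qed
    also have "\<dots> = 4 * c^2 * \<alpha>"
      using alpha_pos D_pos by (simp add: a_def)
    finally show ?thesis .
  qed
  have phm[measurable]: "\<phi> \<in> borel_measurable borel"
    by (rule borel_measurable_continuous_onI[OF phi_diff(3)[OF phi_smooth]])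
  have omm[measurable]: "\<omega> \<in> borel_measurable borel"
    using omega_H[unfolded H_class_def mem_Collect_eq] by (elim conjE)
  have fm[measurable]: "f \<in> borel_measurable borel"
  proof -
    have "f = (\<lambda>x. \<omega> x + (\<Sum>j=1..D. (2 * \<theta> j - 1) * (c * \<phi> (tt j + a * x))))"
      using f_eq by (simp add: b_def fun_eq_iff)
    also have "\<dots> \<in> borel_measurable borel" by measurable
    finally show ?thesis .
  qed
  have gm[measurable]: "g \<in> borel_measurable borel"
  proof -
    have "g = (\<lambda>x. \<omega> x + (\<Sum>j=1..D. (2 * \<theta>' j - 1) * (c * \<phi> (tt j + a * x))))"
      using g_eq by (simp add: b_def fun_eq_iff)
    also have "\<dots> \<in> borel_measurable borel" by measurable
    finally show ?thesis .
  qed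
  have hm: "h \<in> borel_measurable lborel"
  proof -
    have "(\<lambda>x. f x * ln (f x / g x)) \<in> borel_measurable borel" by measurable
    then show ?thesis by (simp add: h_def[abs_def])
  qed
  have ibound: "integrable lborel (\<lambda>x. \<bar>d x\<bar> + K * Q x)"
    using id iQ by simp
  have ih: "integrable lborel h"
  proof (rule Bochner_Integration.integrable_bound[OF ibound hm])
    show "AE x in lborel. norm (h x) \<le> norm (\<bar>d x\<bar> + K * Q x)"
    proof (rule AE_I2)
      fix x
      have Qn: "Q x \<ge> 0" unfolding Q_def by (intro sum_nonneg) simp
      have "K * Q x \<ge> 0" using K_pos Qn by simp
      then show "norm (h x) \<le> norm (\<bar>d x\<bar> + K * Q x)" using pw[of x] by auto
    qed
  qed
  have "(\<integral>x. h x \<partial>lborel) \<le> (\<integral>x. d x + K * Q x \<partial>lborel)"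
    using ih id iQ pw by (intro integral_mono) auto
  also have "\<dots> = (\<integral>x. d x \<partial>lborel) + K * (\<integral>x. Q x \<partial>lborel)"
    using id iQ by simp
  also have "\<dots> \<le> K * (4 * c^2 * \<alpha>)"
    using intd intQ K_pos by simp
  also have "\<dots> = 5 * \<xi> * \<alpha> / (4 * A\<^sup>2) * P^2"
    using xi_pos A_pos by (simp add: K_def c_def power2_eq_square)
  also have "P^2 = real D powr (- 2 * \<beta>)"
    unfolding P_def power2_eq_square by (simp add: powr_add[symmetric])
  finally have kl: "(\<integral>x. h x \<partial>lborel) \<le> 5 * \<xi> * \<alpha> / (4 * A\<^sup>2) * real D powr (- 2 * \<beta>)" .
  show ?thesis
    using ih kl unfolding KL_def h_def f_def g_def by simp
qed

end
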